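(* Let $v\ge 2$, $n\ge 1$ and $\epsilon>0$, and let $(\mathcal{X},\mathcal{Y},\mathcal{I})$ be a $(v,b,r,k,\lambda)$-block design with $\mathcal{X}=\{1,\dots,v\}$. Let $Q$ be the associated block design mechanism, $Q(y|x)=\alpha e^\epsilon$ if $(x,y)\in\mathcal{I}$ and $Q(y|x)=\alpha$ otherwise, where $\alpha=\frac{1}{re^\epsilon+b-r}$. Let $X_1,\dots,X_n$ be i.i.d. with distribution $P\in\Delta_v$ and, independently for each $i$, $Y_i\sim Q(\cdot|X_i)$. Define, for $x\in\mathcal{X}$, $$\hat{P}_{n,x}(Y_1,\dots,Y_n)=\frac{1}{(r-\lambda)(e^\epsilon-1)}\left(\frac{N_x(Y_1,\dots,Y_n)}{n\alpha}-(\lambda e^\epsilon+(r-\lambda))\right),\qquad N_x(Y_1,\dots,Y_n)=\sum_{i=1}^n \mathbb{1}(Y_i\in\mathcal{I}_x).$$ Then $\hat{P}_n=(\hat P_{n,1},\dots,\hat P_{n,v})$ is unbiased, i.e. $\mathbb{E}_{P,Q}[\hat P_n]=P$ for all $P\in\Delta_v$; its risk under the squared loss $\ell_2^2(p,\hat p)=\sum_{x=1}^v (p_x-\hat p_x)^2$ is $$R_{v,n}(\ell_2^2,P,Q,\hat P_n)=\frac{1}{n}\left(\frac{(v-1)^2(ke^\epsilon+v-k)^2}{k(v-k)(e^\epsilon-1)^2v}+\frac{1}{v}-\sum_{x\in\mathcal{X}}P_x^2\right),$$ and its worst-case risk is $$\sup_{P\in\Delta_v}R_{v,n}(\ell_2^2,P,Q,\hat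 P_n)=\frac{(v-1)^2(ke^\epsilon+v-k)^2}{k(v-k)(e^\epsilon-1)^2nv},$$ the supremum being attained when $P$ is the uniform distribution.
   Context: $\Delta_v$ is the set of probability vectors on $\{1,\dots,v\}$. An incidence structure is a triple $(\mathcal{X},\mathcal{Y},\mathcal{I})$ with $\mathcal{I}\subset\mathcal{X}\times\mathcal{Y}$; write $\mathcal{I}_x=\{y:(x,y)\in\mathcal{I}\}$ and $\mathcal{I}^y=\{x:(x,y)\in\mathcal{I}\}$. For integers $v>k>0$, $b>r>\lambda\ge0$, a $(v,b,r,k,\lambda)$-block design is an incidence structure with $|\mathcal{X}|=v$, $|\mathcal{Y}|=b$, $|\mathcal{I}_x|=r$ for all $x$, $|\mathcal{I}^y|=k$ for all $y$, and $|\mathcal{I}_x\cap\mathcal{I}_{x'}|=\lambda$ for all $x\ne x'$. The risk is $R_{v,n}(\ell,P,Q,\hat P_n)=\mathbb{E}[\ell(P,\hat P_n(Y_1,\dots,Y_n))]$ with expectation over $X_i\sim P$ i.i.d. and $Y_i\sim Q(\cdot|X_i)$. *)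

theory Defs
  imports "HOL-Probability.Probability"
begin

definition block_design ::
  "nat \<Rightarrow> nat \<Rightarrow> nat \<Rightarrow> nat \<Rightarrow> nat \<Rightarrow> 'b set \<Rightarrow> (nat \<times> 'b) set \<Rightarrow> bool" where
  "block_design v b r k lam Y I \<longleftrightarrow>
     v > k \<and> k > 0 \<and> b > r \<and> r > lam \<and>
     I \<subseteq> {1..v} \<times> Y \<and> finite Y \<and> card Y = b \<and>
     (\<forall>x\<in>{1..v}. card {y. (x, y) \<in> I} = r) \<and>
     (\<forall>y\<in>Y. card {x. (x, y) \<in> I} = k) \<and>
     (\<forall>x\<in>{1..v}. \<forall>x'\<in>{1..v}. x \<noteq> x' \<longrightarrow>
        card ({y. (x, y) \<in> I} \<inter> {y. (x', y) \<in> I}) = lam)"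

definition prob_simplex :: "nat \<Rightarrow> nat pmf set" where
  "prob_simplex v = {P. set_pmf P \<subseteq> {1..v}}"

definition bd_alpha :: "nat \<Rightarrow> nat \<Rightarrow> real \<Rightarrow> real" where
  "bd_alpha b r \<epsilon> = 1 / (real r * exp \<epsilon> + real b - real r)"

definition bd_mech :: "nat \<Rightarrow> nat \<Rightarrow> 'b set \<Rightarrow> (nat \<times> 'b) set \<Rightarrow> real \<Rightarrow> nat \<Rightarrow> 'b pmf" where
  "bd_mech b r Y I \<epsilon> x = embed_pmf (\<lambda>y. if y \<in> Y then
      (if (x, y) \<in> I then bd_alpha b r \<epsilon> * exp \<epsilon> else bd_alpha b r \<epsilon>) else 0)"

definition sample :: "nat pmf \<Rightarrow> (nat \<Rightarrow> 'b pmf) \<Rightarrow> nat \<Rightarrow> (nat \<Rightarrow> nat \<times> 'b) pmf" where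
  "sample P Q n = Pi_pmf {..<n} undefined
      (\<lambda>_. bind_pmf P (\<lambda>x. map_pmf (\<lambda>y. (x, y)) (Q x)))"

definition count_N :: "(nat \<times> 'b) set \<Rightarrow> nat \<Rightarrow> nat \<Rightarrow> (nat \<Rightarrow> nat \<times> 'b) \<Rightarrow> nat" where
  "count_N I n x w = card {i \<in> {..<n}. (x, snd (w i)) \<in> I}"

definition bd_est ::
  "nat \<Rightarrow> nat \<Rightarrow> nat \<Rightarrow> (nat \<times> 'b) set \<Rightarrow> real \<Rightarrow> nat \<Rightarrow> nat \<Rightarrow> (nat \<Rightarrow> nat \<times> 'b) \<Rightarrow> real" where
  "bd_est b r lam I \<epsilon> n x w =
     1 / ((real r - real lam) * (exp \<epsilon> - 1)) *
     (real (count_N I n x w) / (real n * bd_alpha b r \<epsilon>)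
        - (real lam * exp \<epsilon> + (real r - real lam)))"

definition bd_risk ::
  "nat \<Rightarrow> nat \<Rightarrow> nat \<Rightarrow> nat \<Rightarrow> 'b set \<Rightarrow> (nat \<times> 'b) set \<Rightarrow> real \<Rightarrow> nat \<Rightarrow> nat pmf \<Rightarrow> real" where
  "bd_risk v b r lam Y I \<epsilon> n P =
     measure_pmf.expectation (sample P (bd_mech b r Y I \<epsilon>) n)
       (\<lambda>w. \<Sum>x\<in>{1..v}. (pmf P x - bd_est b r lam I \<epsilon> n x w)\<^sup>2)"

end

theory Submission
  imports Defs
begin


lemma fin_Pi_set:
  fixes n :: nat
  assumes "finite (set_pmf \<mu>)"
  shows "finite (set_pmf (Pi_pmf {..<n} d (\<lambda>_. \<mu>)))"
  using assms by (simp add: set_Pi_pmf finite_PiE_dflt o_def)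

lemma comp_exp:
  fixes \<mu> :: "'a pmf" and f :: "'a \<Rightarrow> real" and n :: nat
  assumes "i < n"
  shows "measure_pmf.expectation (Pi_pmf {..<n} d (\<lambda>_. \<mu>)) (\<lambda>w. f (w i))
         = measure_pmf.expectation \<mu> f"
proof -
  have "measure_pmf.expectation (Pi_pmf {..<n} d (\<lambda>_. \<mu>)) (\<lambda>w. f (w i)) =
     measure_pmf.expectation (map_pmf (\<lambda>w. w i) (Pi_pmf {..<n} d (\<lambda>_. \<mu>))) f" by simp
  also have "map_pmf (\<lambda>w. w i) (Pi_pmf {..<n} d (\<lambda>_. \<mu>)) = \<mu>"
    using assms by (subst Pi_pmf_component) auto
  finally show ?thesis .
qed

lemma moment1:
  fixes \<mu> :: "'a pmf" and h :: "'a \<Rightarrow> real" and n :: nat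
  assumes "finite (set_pmf \<mu>)"
  shows "measure_pmf.expectation (Pi_pmf {..<n} d (\<lambda>_. \<mu>)) (\<lambda>w. \<Sum>i<n. h (w i))
         = real n * measure_pmf.expectation \<mu> h"
proof -
  have int: "integrable (Pi_pmf {..<n} d (\<lambda>_. \<mu>)) f" for f :: "_ \<Rightarrow> real"
    by (rule integrable_measure_pmf_finite) (rule fin_Pi_set[OF assms])
  show ?thesis
    by (simp add: Bochner_Integration.integral_sum int comp_exp)
qed

lemma pair_exp:
  fixes \<mu> :: "'a pmf" and h :: "'a \<Rightarrow> real" and n :: nat
  assumes "finite (set_pmf \<mu>)" "\<And>z. h z \<ge> 0" "i < n" "j < n" "i \<noteq> j"
  shows "measure_pmf.expectation (Pi_pmf {..<n} d (\<lambda>_. \<mu>)) (\<lambda>w. h (w i) * h (w j))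
         = (measure_pmf.expectation \<mu> h)^2"
proof -
  let ?f = "\<lambda>l y. if l \<in> {i,j} then h y else 1"
  have 1: "(\<lambda>w. h (w i) * h (w j)) = (\<lambda>w. \<Prod>l\<in>{..<n}. ?f l (w l))"
  proof
    fix w
    have "(\<Prod>l\<in>{..<n}. ?f l (w l)) = (\<Prod>l\<in>{..<n} \<inter> {i,j}. h (w l))"
      by (subst prod.inter_restrict) auto
    also have "{..<n} \<inter> {i,j} = {i,j}" using assms by auto
    finally show "h (w i) * h (w j) = (\<Prod>l\<in>{..<n}. ?f l (w l))" using assms by simp
  qed
  have "measure_pmf.expectation (Pi_pmf {..<n} d (\<lambda>_. \<mu>)) (\<lambda>w. \<Prod>l\<in>{..<n}. ?f l (w l))
      = (\<Prod>l\<in>{..<n}. measure_pmf.expectation \<mu> (?f l))"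
    by (rule expectation_prod_Pi_pmf) (auto intro: integrable_measure_pmf_finite assms)
  also have "\<dots> = (\<Prod>l\<in>{..<n} \<inter> {i,j}. measure_pmf.expectation \<mu> h)"
    by (subst prod.inter_restrict) (auto intro!: prod.cong)
  also have "{..<n} \<inter> {i,j} = {i,j}" using assms by auto
  finally show ?thesis using 1 assms by (simp add: power2_eq_square)
qed

lemma moment2:
  fixes \<mu> :: "'a pmf" and h :: "'a \<Rightarrow> real" and n :: nat
  assumes fin: "finite (set_pmf \<mu>)" and h01: "\<And>z. h z = 0 \<or> h z = 1"
  shows "measure_pmf.expectation (Pi_pmf {..<n} d (\<lambda>_. \<mu>)) (\<lambda>w. (\<Sum>i<n. h (w i))^2)
         = real n * measure_pmf.expectation \<mu> h
           + real n * (real n - 1) * (measure_pmf.expectation \<mu> h)^2"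
proof -
  let ?M = "Pi_pmf {..<n} d (\<lambda>_. \<mu>)"
  let ?p = "measure_pmf.expectation \<mu> h"
  have hh: "h z * h z = h z" for z using h01[of z] by auto
  have hnn: "h z \<ge> 0" for z using h01[of z] by auto
  have int: "integrable ?M f" for f :: "_ \<Rightarrow> real"
    by (rule integrable_measure_pmf_finite) (rule fin_Pi_set[OF fin])
  have "(\<lambda>w. (\<Sum>i<n. h (w i))^2) = (\<lambda>w. \<Sum>i<n. \<Sum>j<n. h (w i) * h (w j))"
    by (simp add: power2_eq_square sum_product)
  hence "measure_pmf.expectation ?M (\<lambda>w. (\<Sum>i<n. h (w i))^2)
      = (\<Sum>i<n. \<Sum>j<n. measure_pmf.expectation ?M (\<lambda>w. h (w i) * h (w j)))"
    by (simp add: Bochner_Integration.integral_sum int)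
  also have "\<dots> = (\<Sum>i<n. \<Sum>j<n. ?p^2 + (if j = i then ?p - ?p^2 else 0))"
  proof (intro sum.cong refl)
    fix i j assume "i \<in> {..<n}" "j \<in> {..<n}"
    then show "measure_pmf.expectation ?M (\<lambda>w. h (w i) * h (w j)) = ?p^2 + (if j = i then ?p - ?p^2 else 0)"
      using pair_exp[OF fin hnn, of i n j d] comp_exp[of i n d \<mu> h] by (auto simp: hh)
  qed
  also have "\<dots> = real n * ?p + real n * (real n - 1) * ?p^2"
    by (simp add: sum.distrib algebra_simps power2_eq_square)
  finally show ?thesis .
qed

lemma card_sum:
  "finite A \<Longrightarrow> real (card {i \<in> A. Q i}) = (\<Sum>i\<in>A. if Q i then 1 else 0)"
  by (simp add: sum.If_cases Int_def conj_commute)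


lemma alg0:
  fixes a k r e w u :: real
  assumes "a > 0" "k > 0" "w > 0" "e > 0" "r > 0" "u > 0" and hw: "w = u - k" and hu: "u = a + 1"
  shows "(u * (r * ((k - 1) * e + a) / a) + (r * w / a) * e) * (r * (k * e + u) / k) / ((r * w / a) * e)^2
       - (u * (r * ((k - 1) * e + a) / a)^2 + 2 * (r * ((k - 1) * e + a) / a) * ((r * w / a) * e)) / ((r * w / a) * e)^2
       = a^2 * (k * (e + 1) + u - k)^2 / (k * w * e^2 * u) + 1 / u"
proof -
  have "u * (r * ((k - 1) * e + a) / a) + (r * w / a) * e = r * (u * ((k - 1) * e + a) + w * e) / a"
    using assms by (simp add: field_simps)
  show ?thesis using assms(1-6)
    apply (simp add: field_simps power2_eq_square)
    unfolding hw hu by (simp add: algebra_simps)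
qed
lemma alg:
  fixes v k r b l E :: real
  assumes "k \<ge> 1" "v > k" "E > 1" "r > l" "l \<ge> 0" "b * k = v * r" "l * (v - 1) = r * (k - 1)"
  shows "(v * (l * E + (r - l)) + (r - l) * (E - 1)) * (r * E + b - r) / ((r - l) * (E - 1))^2
       - (v * (l * E + (r - l))^2 + 2 * (l * E + (r - l)) * ((r - l) * (E - 1))) / ((r - l) * (E - 1))^2
       = (v - 1)^2 * (k * E + v - k)^2 / (k * (v - k) * (E - 1)^2 * v) + 1 / v"
proof -
  have v1: "v - 1 > 0" using assms by linarith
  have r0: "r > 0" using assms by linarith
  have hA: "r - l = r * (v - k) / (v - 1)" using assms v1 by (simp add: field_simps)
  have e1: "l * v = l + k * r - r" using assms(7) by (simp add: algebra_simps)
  have e2: "E * (l * v) = E * l + E * (k * r) - E * r" unfolding e1 by (simp add: algebra_simps)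
  have hC: "l * E + (r - l) = r * ((k - 1) * (E - 1) + (v - 1)) / (v - 1)"
    using assms v1 by (simp add: field_simps) (use e1 e2 in \<open>simp add: algebra_simps\<close>)
  have hB: "r * E + b - r = r * (k * (E - 1) + v) / k"
    using assms by (simp add: field_simps)
  have X: "(v * (r * ((k - 1) * (E - 1) + (v - 1)) / (v - 1)) + (r * (v - k) / (v - 1)) * (E - 1)) * (r * (k * (E - 1) + v) / k) / ((r * (v - k) / (v - 1)) * (E - 1))^2
       - (v * (r * ((k - 1) * (E - 1) + (v - 1)) / (v - 1))^2 + 2 * (r * ((k - 1) * (E - 1) + (v - 1)) / (v - 1)) * ((r * (v - k) / (v - 1)) * (E - 1))) / ((r * (v - k) / (v - 1)) * (E - 1))^2
       = (v - 1)^2 * (k * ((E - 1) + 1) + v - k)^2 / (k * (v - k) * (E - 1)^2 * v) + 1 / v"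
    by (rule alg0) (use assms v1 r0 in auto)
  show ?thesis unfolding hC unfolding hA hB using X by simp
qed



locale bdl =
  fixes v b r k lam :: nat and Y :: "'b set" and I :: "(nat \<times> 'b) set" and \<epsilon> :: real
  assumes v2: "v \<ge> 2" and eps: "\<epsilon> > 0" and bd: "block_design v b r k lam Y I"
begin

abbreviation "E \<equiv> exp \<epsilon>"
abbreviation "al \<equiv> bd_alpha b r \<epsilon>"
abbreviation "Q \<equiv> bd_mech b r Y I \<epsilon>"

lemma facts: "v > k" "k > 0" "b > r" "r > lam" "I \<subseteq> {1..v} \<times> Y" "finite Y" "card Y = b"
  "\<And>x. x \<in> {1..v} \<Longrightarrow> card {y. (x, y) \<in> I} = r"
  "\<And>y. y \<in> Y \<Longrightarrow> card {x. (x, y) \<in> I} = k"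
  "\<And>x x'. x \<in> {1..v} \<Longrightarrow> x' \<in> {1..v} \<Longrightarrow> x \<noteq> x' \<Longrightarrow>
        card ({y. (x, y) \<in> I} \<inter> {y. (x', y) \<in> I}) = lam"
  using bd unfolding block_design_def by auto

lemma E_gt1: "E > 1" using eps by simp

lemma Ix_sub: "{y. (x, y) \<in> I} \<subseteq> Y" using facts(5) by auto
lemma Ix_fin: "finite {y. (x, y) \<in> I}" using Ix_sub facts(6) finite_subset by blast

lemma al_pos: "al > 0" and al_eq: "al * (real r * E + real b - real r) = 1"
proof -
  have "real r * E + real b - real r > 0" using facts(3) E_gt1
    by (smt (verit) mult_nonneg_nonneg of_nat_0_le_iff of_nat_less_iff)
  then show "al > 0" "al * (real r * E + real b - real r) = 1" unfolding bd_alpha_def by auto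
qed

lemma sum_if_I:
  assumes "x \<in> {1..v}"
  shows "(\<Sum>y\<in>Y. if (x, y) \<in> I then al * E else al) = 1"
proof -
  have "(\<Sum>y\<in>Y. if (x, y) \<in> I then al * E else al)
     = al * E * card (Y \<inter> {y. (x, y) \<in> I}) + al * card (Y \<inter> - {y. (x, y) \<in> I})"
    using facts(6) by (simp add: sum.If_cases)
  also have "Y \<inter> {y. (x, y) \<in> I} = {y. (x, y) \<in> I}" using Ix_sub by auto
  also have "Y \<inter> - {y. (x, y) \<in> I} = Y - {y. (x, y) \<in> I}" by auto
  also have "card (Y - {y. (x, y) \<in> I}) = b - r"
    using card_Diff_subset[OF Ix_fin Ix_sub] facts assms by simp
  finally show ?thesis using facts(8)[OF assms] al_eq facts(3)
    by (simp add: of_nat_diff algebra_simps)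
qed

lemma pmf_Q:
  assumes "x \<in> {1..v}"
  shows "pmf (Q x) y = (if y \<in> Y then (if (x, y) \<in> I then al * E else al) else 0)"
  unfolding bd_mech_def
proof (rule pmf_embed_pmf)
  fix y show "0 \<le> (if y \<in> Y then (if (x, y) \<in> I then al * E else al) else 0)"
    using al_pos by auto
next
  have "(\<integral>\<^sup>+ y. ennreal (if y \<in> Y then (if (x, y) \<in> I then al * E else al) else 0) \<partial>count_space UNIV)
      = (\<Sum>y\<in>Y. ennreal (if y \<in> Y then (if (x, y) \<in> I then al * E else al) else 0))"
    using facts(6) by (intro nn_integral_count_space') auto
  also have "\<dots> = ennreal (\<Sum>y\<in>Y. (if y \<in> Y then (if (x, y) \<in> I then al * E else al) else 0))"
    using al_pos by (intro sum_ennreal) auto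
  also have "(\<Sum>y\<in>Y. (if y \<in> Y then (if (x, y) \<in> I then al * E else al) else 0)) = 1"
    using sum_if_I[OF assms] by (simp cong: sum.cong)
  finally show "(\<integral>\<^sup>+ y. ennreal (if y \<in> Y then (if (x, y) \<in> I then al * E else al) else 0) \<partial>count_space UNIV) = 1"
    by simp
qed

definition mu :: "nat pmf \<Rightarrow> (nat \<times> 'b) pmf" where
  "mu P = bind_pmf P (\<lambda>x. map_pmf (\<lambda>y. (x, y)) (Q x))"

lemma sample_eq: "sample P Q n = Pi_pmf {..<n} undefined (\<lambda>_. mu P)"
  unfolding sample_def mu_def ..

lemma pmf_mu: "pmf (mu P) (x', y) = pmf P x' * pmf (Q x') y"
proof -
  have "pmf (mu P) (x', y) = (\<integral>x. (if x = x' then pmf (Q x') y else 0) \<partial>measure_pmf P)"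
    unfolding mu_def pmf_bind
  proof (intro Bochner_Integration.integral_cong refl)
    fix x
    have "(\<lambda>y. (x, y)) -` {(x', y)} = (if x = x' then {y} else {})" by auto
    then show "pmf (map_pmf (\<lambda>y. (x, y)) (Q x)) (x', y) = (if x = x' then pmf (Q x') y else 0)"
      by (simp add: pmf_map measure_pmf_single)
  qed
  also have "\<dots> = (\<Sum>a\<in>{x'}. (if a = x' then pmf (Q x') y else 0) * pmf P a)"
    by (rule integral_measure_pmf_real[where A="{x'}"]) (auto split: if_splits)
  finally show ?thesis by simp
qed

lemma set_Q: "x \<in> {1..v} \<Longrightarrow> set_pmf (Q x) \<subseteq> Y"
  using pmf_Q by (auto simp: set_pmf_eq)

lemma set_mu: "P \<in> prob_simplex v \<Longrightarrow> set_pmf (mu P) \<subseteq> {1..v} \<times> Y"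
  unfolding mu_def prob_simplex_def using set_Q by fastforce

lemma fin_mu: "P \<in> prob_simplex v \<Longrightarrow> finite (set_pmf (mu P))"
  using set_mu facts(6) finite_subset by blast

lemma exp_mu:
  assumes "P \<in> prob_simplex v"
  shows "measure_pmf.expectation (mu P) f
     = (\<Sum>x'\<in>{1..v}. pmf P x' * (\<Sum>y\<in>Y. f (x', y) * pmf (Q x') y))"
proof -
  have "measure_pmf.expectation (mu P) f = (\<Sum>z\<in>{1..v} \<times> Y. f z * pmf (mu P) z)"
    using set_mu[OF assms] facts(6) by (intro integral_measure_pmf_real) auto
  also have "\<dots> = (\<Sum>x'\<in>{1..v}. \<Sum>y\<in>Y. f (x', y) * pmf (mu P) (x', y))"
    by (simp add: sum.cartesian_product)
  also have "\<dots> = (\<Sum>x'\<in>{1..v}. pmf P x' * (\<Sum>y\<in>Y. f (x', y) * pmf (Q x') y))"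
    by (simp add: pmf_mu sum_distrib_left algebra_simps)
  finally show ?thesis .
qed

definition hI :: "nat \<Rightarrow> nat \<times> 'b \<Rightarrow> real" where
  "hI x z = (if (x, snd z) \<in> I then 1 else 0)"

lemma inner_sum:
  assumes "x \<in> {1..v}" "x' \<in> {1..v}"
  shows "(\<Sum>y\<in>Y. hI x (x', y) * pmf (Q x') y)
     = (if x' = x then al * E * r else al * (E * lam + (real r - real lam)))"
proof -
  have "(\<Sum>y\<in>Y. hI x (x', y) * pmf (Q x') y)
      = (\<Sum>y\<in>Y \<inter> {y. (x, y) \<in> I}. if (x', y) \<in> I then al * E else al)"
  proof -
    have "(\<Sum>y\<in>Y. hI x (x', y) * pmf (Q x') y)
       = (\<Sum>y\<in>Y. if y \<in> {y. (x, y) \<in> I} then (if (x', y) \<in> I then al * E else al) else 0)"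
      using assms by (intro sum.cong refl) (simp add: hI_def pmf_Q)
    also have "\<dots> = (\<Sum>y\<in>Y \<inter> {y. (x, y) \<in> I}. if (x', y) \<in> I then al * E else al)"
      using facts(6) by (simp add: sum.inter_restrict)
    finally show ?thesis .
  qed
  also have "Y \<inter> {y. (x, y) \<in> I} = {y. (x, y) \<in> I}" using Ix_sub by auto
  also have "(\<Sum>y\<in>{y. (x, y) \<in> I}. if (x', y) \<in> I then al * E else al)
     = al * E * card ({y. (x, y) \<in> I} \<inter> {y. (x', y) \<in> I})
       + al * card ({y. (x, y) \<in> I} - {y. (x', y) \<in> I})"
    using Ix_fin by (simp add: sum.If_cases Diff_eq)
  also have "\<dots> = (if x' = x then al * E * r else al * (E * lam + (real r - real lam)))"
  proof (cases "x' = x")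
    case True then show ?thesis using facts(8)[OF assms(1)] by simp
  next
    case False
    have c1: "card ({y. (x, y) \<in> I} \<inter> {y. (x', y) \<in> I}) = lam"
      using facts(10)[OF assms] False by auto
    have "card ({y. (x, y) \<in> I} - {y. (x', y) \<in> I})
        = card {y. (x, y) \<in> I} - card ({y. (x, y) \<in> I} \<inter> {y. (x', y) \<in> I})"
      using Ix_fin by (simp add: card_Diff_subset_Int flip: Diff_Int2)
    then have "card ({y. (x, y) \<in> I} - {y. (x', y) \<in> I}) = r - lam"
      using c1 facts(8)[OF assms(1)] by simp
    then show ?thesis using False c1 facts(4) by (simp add: of_nat_diff algebra_simps)
  qed
  finally show ?thesis .
qed

lemma sum_P1: "P \<in> prob_simplex v \<Longrightarrow> (\<Sum>x\<in>{1..v}. pmf P x) = 1"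
  unfolding prob_simplex_def by (intro sum_pmf_eq_1) auto

lemma p_x:
  assumes P: "P \<in> prob_simplex v" and x: "x \<in> {1..v}"
  shows "measure_pmf.expectation (mu P) (hI x)
     = al * ((E * lam + (real r - real lam)) + (real r - real lam) * (E - 1) * pmf P x)"
proof -
  let ?c = "E * lam + (real r - real lam)"
  have "measure_pmf.expectation (mu P) (hI x)
      = (\<Sum>x'\<in>{1..v}. pmf P x' * (if x' = x then al * E * r else al * ?c))"
    using exp_mu[OF P] inner_sum[OF x] by simp
  also have "\<dots> = pmf P x * (al * E * r) + (\<Sum>x'\<in>{1..v} - {x}. pmf P x' * (al * ?c))"
    using x by (simp add: sum.remove)
  also have "(\<Sum>x'\<in>{1..v} - {x}. pmf P x' * (al * ?c)) = (1 - pmf P x) * (al * ?c)"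
    using sum_P1[OF P] x by (simp add: sum_distrib_right [symmetric] sum_diff1)
  finally show ?thesis by (simp add: algebra_simps)
qed

lemma Iy_sub: "{x. (x, y) \<in> I} \<subseteq> {1..v}" using facts(5) by auto
lemma Iy_fin: "finite {x. (x, y) \<in> I}" using Iy_sub finite_subset by blast

lemma bk: "b * k = v * r"
proof -
  have fI: "finite I" using facts(5,6) finite_subset by blast
  have "I = Sigma {1..v} (\<lambda>x. {y. (x, y) \<in> I})" using facts(5) by auto
  then have "card I = (\<Sum>x\<in>{1..v}. card {y. (x, y) \<in> I})"
    by (metis card_SigmaI finite_atLeastAtMost Ix_fin)
  also have "\<dots> = v * r" using facts(8) by simp
  finally have 1: "card I = v * r" .
  have "(\<lambda>(x, y). (y, x)) ` I = Sigma Y (\<lambda>y. {x. (x, y) \<in> I})" using facts(5) by force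
  moreover have "card ((\<lambda>(x, y). (y, x)) ` I) = card I"
    by (intro card_image) (auto simp: inj_on_def)
  moreover have "card (Sigma Y (\<lambda>y. {x. (x, y) \<in> I})) = (\<Sum>y\<in>Y. card {x. (x, y) \<in> I})"
    using facts(6) Iy_fin by (simp add: card_SigmaI)
  moreover have "(\<Sum>y\<in>Y. card {x. (x, y) \<in> I}) = b * k" using facts(7,9) by simp
  ultimately show ?thesis using 1 by simp
qed

lemma lamv: "lam * (v - 1) = r * (k - 1)"
proof -
  have one: "(1::nat) \<in> {1..v}" using v2 by auto
  let ?S1 = "Sigma ({1..v} - {1}) (\<lambda>x'. {y. (1, y) \<in> I} \<inter> {y. (x', y) \<in> I})"
  let ?S2 = "Sigma {y. (1, y) \<in> I} (\<lambda>y. {x. (x, y) \<in> I} - {1})"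
  have "card ?S1 = (\<Sum>x'\<in>{1..v} - {1}. card ({y. (1, y) \<in> I} \<inter> {y. (x', y) \<in> I}))"
    using Ix_fin by (simp add: card_SigmaI)
  also have "\<dots> = (\<Sum>x'\<in>{1..v} - {1}. lam)"
    using facts(10)[OF one] by (intro sum.cong refl) auto
  also have "\<dots> = (v - 1) * lam" using one by (simp add: card_Diff_singleton)
  finally have c1: "card ?S1 = (v - 1) * lam" .
  have "card ?S2 = (\<Sum>y\<in>{y. (1, y) \<in> I}. card ({x. (x, y) \<in> I} - {1}))"
    using Ix_fin Iy_fin by (simp add: card_SigmaI)
  also have "\<dots> = (\<Sum>y\<in>{y. (1, y) \<in> I}. k - 1)"
  proof (intro sum.cong refl)
    fix y assume y: "y \<in> {y. (1, y) \<in> I}"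
    then have "y \<in> Y" using Ix_sub by auto
    then show "card ({x. (x, y) \<in> I} - {1}) = k - 1"
      using facts(9) y Iy_fin by (simp add: card_Diff_singleton)
  qed
  also have "\<dots> = r * (k - 1)" using facts(8)[OF one] by simp
  finally have c2: "card ?S2 = r * (k - 1)" .
  have "(\<lambda>(x, y). (y, x)) ` ?S1 = ?S2" using facts(5) by force
  moreover have "card ((\<lambda>(x, y). (y, x)) ` ?S1) = card ?S1"
    by (intro card_image) (auto simp: inj_on_def)
  ultimately show ?thesis using c1 c2 by (simp add: mult.commute)
qed

definition cc where "cc = real lam * E + (real r - real lam)"
definition DD where "DD = (real r - real lam) * (E - 1)"

lemma DD_pos: "DD > 0" using facts(4) E_gt1 unfolding DD_def by simp

definition NN :: "nat \<Rightarrow> nat \<Rightarrow> (nat \<Rightarrow> nat \<times> 'b) \<Rightarrow> real" where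
  "NN n x w = (\<Sum>i<n. hI x (w i))"

lemma est_eq: assumes n: "n \<ge> 1" shows "bd_est b r lam I \<epsilon> n x w = NN n x w / (DD * real n * al) - cc / DD"
proof -
  have "real (count_N I n x w) = NN n x w"
    unfolding count_N_def NN_def hI_def by (subst card_sum) auto
  then have "bd_est b r lam I \<epsilon> n x w = 1 / DD * (NN n x w / (real n * al) - cc)"
    unfolding bd_est_def cc_def DD_def by (simp add: mult.commute)
  then show ?thesis using DD_pos al_pos n by (simp add: field_simps)
qed

lemma int_M: "P \<in> prob_simplex v \<Longrightarrow> integrable (measure_pmf (sample P Q n)) f"
  for f :: "_ \<Rightarrow> real"
  unfolding sample_eq by (intro integrable_measure_pmf_finite fin_Pi_set fin_mu)

lemma hI01: "hI x z = 0 \<or> hI x z = 1" unfolding hI_def by auto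

lemma p_x': assumes P: "P \<in> prob_simplex v" and x: "x \<in> {1..v}"
  shows "measure_pmf.expectation (mu P) (hI x) = al * (cc + DD * pmf P x)"
  using p_x[OF P x] by (simp add: cc_def DD_def mult.commute)

lemma EN: assumes P: "P \<in> prob_simplex v" and x: "x \<in> {1..v}" shows "
   measure_pmf.expectation (sample P Q n) (NN n x) = real n * (al * (cc + DD * pmf P x))"
  unfolding sample_eq NN_def by (simp only: moment1[OF fin_mu[OF P]] p_x'[OF P x])

lemma EN2: assumes P: "P \<in> prob_simplex v" and x: "x \<in> {1..v}" shows "
   measure_pmf.expectation (sample P Q n) (\<lambda>w. (NN n x w)^2)
     = real n * (al * (cc + DD * pmf P x)) + real n * (real n - 1) * (al * (cc + DD * pmf P x))^2"
  unfolding sample_eq NN_def by (subst moment2[OF fin_mu[OF P]]) (auto simp: hI01 p_x'[OF P x])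

lemma unbiased:
  assumes P: "P \<in> prob_simplex v" and x: "x \<in> {1..v}" and n: "n \<ge> 1"
  shows "measure_pmf.expectation (sample P Q n) (bd_est b r lam I \<epsilon> n x) = pmf P x"
proof -
  have "measure_pmf.expectation (sample P Q n) (bd_est b r lam I \<epsilon> n x)
     = measure_pmf.expectation (sample P Q n) (\<lambda>w. NN n x w / (DD * real n * al) - cc / DD)"
    by (rule arg_cong[where f="measure_pmf.expectation (sample P Q n)"]) (rule ext, rule est_eq[OF n])
  also have "\<dots> = measure_pmf.expectation (sample P Q n) (NN n x) / (DD * real n * al) - cc / DD"
    using int_M[OF P] by simp
  also have "\<dots> = pmf P x" using EN[OF P x] DD_pos al_pos n by (simp add: field_simps)
  finally show ?thesis .
qed

lemma risk_x:
  assumes P: "P \<in> prob_simplex v" and x: "x \<in> {1..v}" and n: "n \<ge> 1"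
  shows "measure_pmf.expectation (sample P Q n) (\<lambda>w. (pmf P x - bd_est b r lam I \<epsilon> n x w)^2)
     = 1 / real n * ((cc + DD * pmf P x) / (al * DD^2) - (cc + DD * pmf P x)^2 / DD^2)"
proof -
  let ?a0 = "pmf P x + cc / DD" and ?a1 = "1 / (DD * real n * al)"
  have "(\<lambda>w. (pmf P x - bd_est b r lam I \<epsilon> n x w)^2)
      = (\<lambda>w. ?a0^2 - 2 * ?a0 * ?a1 * NN n x w + ?a1^2 * (NN n x w)^2)"
    using n DD_pos al_pos by (intro ext) (simp add: est_eq[OF n] power2_eq_square field_simps)
  then have "measure_pmf.expectation (sample P Q n) (\<lambda>w. (pmf P x - bd_est b r lam I \<epsilon> n x w)^2)
     = ?a0^2 - 2 * ?a0 * ?a1 * measure_pmf.expectation (sample P Q n) (NN n x)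
       + ?a1^2 * measure_pmf.expectation (sample P Q n) (\<lambda>w. (NN n x w)^2)"
    using int_M[OF P] by simp
  also have "\<dots> = 1 / real n * ((cc + DD * pmf P x) / (al * DD^2) - (cc + DD * pmf P x)^2 / DD^2)"
    unfolding EN[OF P x] EN2[OF P x] using DD_pos al_pos n
    by (simp add: field_simps power2_eq_square)
  finally show ?thesis .
qed

definition KK where
  "KK = (real v - 1)^2 * (real k * E + real v - real k)^2
             / (real k * (real v - real k) * (E - 1)^2 * real v)"

lemma alg_inst: "(real v * cc + DD) / (al * DD^2) - (real v * cc^2 + 2 * cc * DD) / DD^2 = KK + 1 / real v"
proof -
  have ia: "1 / al = real r * E + real b - real r" using al_eq al_pos by (simp add: field_simps)
  have "(real v * cc + DD) / (al * DD^2) = (real v * cc + DD) * (real r * E + real b - real r) / DD^2"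
  proof -
    have "(real v * cc + DD) / (al * DD^2) = (real v * cc + DD) * (1 / al) / DD^2" by simp
    then show ?thesis by (simp only: ia)
  qed
  moreover have "real b * real k = real v * real r" using bk by (metis of_nat_mult)
  moreover have "real lam * (real v - 1) = real r * (real k - 1)"
  proof -
    have "real (lam * (v - 1)) = real (r * (k - 1))" using lamv by simp
    then show ?thesis using v2 facts(2) by (simp add: of_nat_diff)
  qed
  ultimately show ?thesis unfolding KK_def cc_def DD_def
    using alg[of "real k" "real v" E "real lam" "real r" "real b"] facts(1,2,4) E_gt1
    by (simp add: algebra_simps)
qed

lemma risk:
  assumes P: "P \<in> prob_simplex v" and n: "n \<ge> 1"
  shows "bd_risk v b r lam Y I \<epsilon> n P = 1 / real n * (KK + 1 / real v - (\<Sum>x\<in>{1..v}. (pmf P x)^2))"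
proof -
  let ?t = "\<lambda>x. cc + DD * pmf P x"
  have "bd_risk v b r lam Y I \<epsilon> n P
      = (\<Sum>x\<in>{1..v}. measure_pmf.expectation (sample P Q n) (\<lambda>w. (pmf P x - bd_est b r lam I \<epsilon> n x w)^2))"
    unfolding bd_risk_def using int_M[OF P] by (simp add: Bochner_Integration.integral_sum)
  also have "\<dots> = (\<Sum>x\<in>{1..v}. 1 / real n * (?t x / (al * DD^2) - (?t x)^2 / DD^2))"
    using risk_x[OF P _ n] by simp
  also have "\<dots> = 1 / real n * ((\<Sum>x\<in>{1..v}. ?t x) / (al * DD^2) - (\<Sum>x\<in>{1..v}. (?t x)^2) / DD^2)"
    by (simp only: sum_distrib_left[symmetric] sum_subtractf sum_divide_distrib)
  also have "(\<Sum>x\<in>{1..v}. ?t x) = real v * cc + DD"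
    using sum_P1[OF P] by (simp add: sum.distrib sum_distrib_left[symmetric])
  also have "(\<Sum>x\<in>{1..v}. (?t x)^2) = real v * cc^2 + 2 * cc * DD + DD^2 * (\<Sum>x\<in>{1..v}. (pmf P x)^2)"
  proof -
    have "(\<Sum>x\<in>{1..v}. (?t x)^2) = (\<Sum>x\<in>{1..v}. cc^2 + 2 * cc * DD * pmf P x + DD^2 * (pmf P x)^2)"
      by (intro sum.cong refl) (simp add: power2_eq_square algebra_simps)
    also have "\<dots> = real v * cc^2 + 2 * cc * DD * (\<Sum>x\<in>{1..v}. pmf P x) + DD^2 * (\<Sum>x\<in>{1..v}. (pmf P x)^2)"
      by (simp add: sum.distrib sum_distrib_left)
    finally show ?thesis using sum_P1[OF P] by simp
  qed
  also have "(real v * cc + DD) / (al * DD^2) - (real v * cc^2 + 2 * cc * DD + DD^2 * (\<Sum>x\<in>{1..v}. (pmf P x)^2)) / DD^2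
      = ((real v * cc + DD) / (al * DD^2) - (real v * cc^2 + 2 * cc * DD) / DD^2) - (\<Sum>x\<in>{1..v}. (pmf P x)^2)"
    using DD_pos by (simp add: add_divide_distrib)
  also have "\<dots> = KK + 1 / real v - (\<Sum>x\<in>{1..v}. (pmf P x)^2)" by (simp add: alg_inst)
  finally show ?thesis .
qed

lemma sumsq_ge:
  assumes P: "P \<in> prob_simplex v"
  shows "(\<Sum>x\<in>{1..v}. (pmf P x)^2) \<ge> 1 / real v"
proof -
  have vp: "real v > 0" using v2 by simp
  have "0 \<le> (\<Sum>x\<in>{1..v}. (pmf P x - 1 / real v)^2)" by (intro sum_nonneg) auto
  also have "\<dots> = (\<Sum>x\<in>{1..v}. (pmf P x)^2 - 2 / real v * pmf P x + 1 / (real v)^2)"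
    by (intro sum.cong refl) (simp add: power2_eq_square algebra_simps)
  also have "\<dots> = (\<Sum>x\<in>{1..v}. (pmf P x)^2) - 2 / real v * (\<Sum>x\<in>{1..v}. pmf P x) + real v / (real v)^2"
    by (simp add: sum.distrib sum_subtractf sum_distrib_left)
  also have "\<dots> = (\<Sum>x\<in>{1..v}. (pmf P x)^2) - 1 / real v"
    using sum_P1[OF P] vp by (simp add: power2_eq_square)
  finally show ?thesis by simp
qed

lemma unif_in: "pmf_of_set {1..v} \<in> prob_simplex v"
proof -
  have "set_pmf (pmf_of_set {1..v}) = {1..v}" using v2 by (intro set_pmf_of_set) auto
  then show ?thesis unfolding prob_simplex_def by simp
qed

lemma unif_sq: "(\<Sum>x\<in>{1..v}. (pmf (pmf_of_set {1..v}) x)^2) = 1 / real v"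
proof -
  have "(\<Sum>x\<in>{1..v}. (pmf (pmf_of_set {1..v}) x)^2) = (\<Sum>x\<in>{1..v}. (1 / real v)^2)"
    using v2 by (intro sum.cong refl) (subst pmf_of_set, auto)
  also have "\<dots> = 1 / real v" using v2 by (simp add: power2_eq_square)
  finally show ?thesis .
qed

end

theorem theorem1:
  fixes v b r k lam n :: nat and Y :: "'b set" and I :: "(nat \<times> 'b) set" and \<epsilon> :: real
  assumes "v \<ge> 2" and "n \<ge> 1" and "\<epsilon> > 0"
    and "block_design v b r k lam Y I"
  shows "(\<forall>P\<in>prob_simplex v. \<forall>x\<in>{1..v}.
            measure_pmf.expectation (sample P (bd_mech b r Y I \<epsilon>) n)
              (bd_est b r lam I \<epsilon> n x) = pmf P x)
    \<and> (\<forall>P\<in>prob_simplex v. bd_risk v b r lam Y I \<epsilon> n P =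
          1 / real n * ((real v - 1)\<^sup>2 * (real k * exp \<epsilon> + real v - real k)\<^sup>2
             / (real k * (real v - real k) * (exp \<epsilon> - 1)\<^sup>2 * real v)
           + 1 / real v - (\<Sum>x\<in>{1..v}. (pmf P x)\<^sup>2)))
    \<and> (SUP P\<in>prob_simplex v. bd_risk v b r lam Y I \<epsilon> n P) =
          (real v - 1)\<^sup>2 * (real k * exp \<epsilon> + real v - real k)\<^sup>2
             / (real k * (real v - real k) * (exp \<epsilon> - 1)\<^sup>2 * real n * real v)
    \<and> bd_risk v b r lam Y I \<epsilon> n (pmf_of_set {1..v}) =
          (real v - 1)\<^sup>2 * (real k * exp \<epsilon> + real v - real k)\<^sup>2
             / (real k * (real v - real k) * (exp \<epsilon> - 1)\<^sup>2 * real n * real v)"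
proof -
  interpret bdl v b r k lam Y I \<epsilon>
    using assms by unfold_locales auto
  have n: "n \<ge> 1" by fact
  have KKn: "1 / real n * KK = (real v - 1)\<^sup>2 * (real k * exp \<epsilon> + real v - real k)\<^sup>2
             / (real k * (real v - real k) * (exp \<epsilon> - 1)\<^sup>2 * real n * real v)"
    unfolding KK_def by simp
  have R: "bd_risk v b r lam Y I \<epsilon> n P = 1 / real n * (KK + 1 / real v - (\<Sum>x\<in>{1..v}. (pmf P x)\<^sup>2))"
    if "P \<in> prob_simplex v" for P using risk[OF that n] .
  have U: "bd_risk v b r lam Y I \<epsilon> n (pmf_of_set {1..v}) = 1 / real n * KK"
    using R[OF unif_in] unif_sq by simp
  have le: "bd_risk v b r lam Y I \<epsilon> n P \<le> 1 / real n * KK" if "P \<in> prob_simplex v" for P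
  proof -
    have "1 / real n * (KK + 1 / real v - (\<Sum>x\<in>{1..v}. (pmf P x)\<^sup>2)) \<le> 1 / real n * KK"
      using sumsq_ge[OF that] n by (intro mult_left_mono) auto
    then show ?thesis using R[OF that] by simp
  qed
  have S: "(SUP P\<in>prob_simplex v. bd_risk v b r lam Y I \<epsilon> n P) = 1 / real n * KK"
    by (rule cSup_eq_maximum) (use U unif_in le in \<open>auto simp: image_iff intro!: bexI[of _ "pmf_of_set {1..v}"]\<close>)
  show ?thesis
    using unbiased[OF _ _ n] R S U KKn unfolding KK_def by auto
qed

end
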